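(* Let $u\in\Sigma$, $\sigma\in\Sigma^+$ and $i,j\in\mathbb N$ with $u\ne\sigma[0]$. If $\langle\{u^i\cdot\sigma\},\{u^j\cdot\sigma\}\rangle$ has a deduction tree, then every (in particular the minimal) deduction tree of it has size at least $\min(i,j)+1$.
   Context: Let $AP$ be a finite set of atomic propositions and $\Sigma=2^{AP}$; $\sigma[0]$ is the first letter of $\sigma$ and $u^i$ is the word consisting of $i$ copies of the letter $u$. For $\sigma=w_0\cdots w_m\in\Sigma^+$ and $j\le m$, $\sigma^{(j)}=w_j\cdots w_m$. For $A\subseteq\Sigma^+$: $A^{\mathsf X}=\{\sigma^{(1)}:\sigma\in A,|\sigma|\ge2\}$; $A^{\mathsf G}=\{\sigma^{(j)}:\sigma\in A,0\le j<|\sigma|\}$; a future point for $A$ is $f:A\to\mathbb N$ with $f(\sigma)<|\sigma|$, and $A^f=\{\sigma^{(f(\sigma))}:\sigma\in A\}$. For a literal $\alpha\in\{p,\neg p:p\in AP\}$, $A\models\alpha$ means $\alpha$ holds at position $0$ of every trace in $A$; $B\perp\alpha$ means it fails at position $0$ of every trace in $B$. Proof system on terms $\langle A,B\rangle$: Atomic: $\langle A,B\rangle$ if $A\models\alpha$, $B\perp\alpha$ for a literal $\alpha$; Or: $\langle A_1\uplus A_2,B\rangle$ from $\langle A_1,B\rangle,\langle A_2,B\rangle$; And: $\langle A,B_1\uplus B_2\rangle$ from $\langle A,B_1\rangle,\langle A,B_2\rangle$; Next: $\langle A,B\rangle$ from $\langle A^{\mathsf X},B^{\mathsf X}\rangle$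 if $|A^{\mathsf X}|=|A|$; WeakNext: $\langle A,B\rangle$ from $\langle A^{\mathsf X},B^{\mathsf X}\rangle$ if $|B^{\mathsf X}|=|B|$; Future: $\langle A,B\rangle$ from $\langle A^f,B^{\mathsf G}\rangle$, $f$ a future point for $A$; Globally: $\langle A,B\rangle$ from $\langle A^{\mathsf G},B^f\rangle$, $f$ a future point for $B$ ($\uplus$ = disjoint union). A deduction tree for $\langle A,B\rangle$ is a finite tree of rule applications rooted at $\langle A,B\rangle$ with all hypotheses derived; its size is its number of rule applications. *)

theory Defs
  imports Main "HOL-Library.Equipollence"
begin

(* Letters are subsets of the finite set of atomic propositions 'ap;
   traces (elements of Sigma^+) are nonempty lists of letters. *)
type_synonym 'ap letter = "'ap set"
type_synonym 'ap trace = "'ap set list"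

datatype 'ap literal = Pos 'ap | Neg 'ap

fun holds_lit :: "'ap literal \<Rightarrow> 'ap letter \<Rightarrow> bool" where
  "holds_lit (Pos p) w = (p \<in> w)"
| "holds_lit (Neg p) w = (p \<notin> w)"

definition models_lit :: "'ap trace set \<Rightarrow> 'ap literal \<Rightarrow> bool" where
  "models_lit A \<alpha> = (\<forall>\<sigma>\<in>A. holds_lit \<alpha> (hd \<sigma>))"

definition refutes_lit :: "'ap trace set \<Rightarrow> 'ap literal \<Rightarrow> bool" where
  "refutes_lit B \<alpha> = (\<forall>\<sigma>\<in>B. \<not> holds_lit \<alpha> (hd \<sigma>))"

definition setX :: "'ap trace set \<Rightarrow> 'ap trace set" where
  "setX A = {drop 1 \<sigma> | \<sigma>. \<sigma> \<in> A \<and> length \<sigma> \<ge> 2}"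

definition setG :: "'ap trace set \<Rightarrow> 'ap trace set" where
  "setG A = {drop j \<sigma> | \<sigma> j. \<sigma> \<in> A \<and> j < length \<sigma>}"

definition future_point :: "'ap trace set \<Rightarrow> ('ap trace \<Rightarrow> nat) \<Rightarrow> bool" where
  "future_point A f = (\<forall>\<sigma>\<in>A. f \<sigma> < length \<sigma>)"

definition setF :: "'ap trace set \<Rightarrow> ('ap trace \<Rightarrow> nat) \<Rightarrow> 'ap trace set" where
  "setF A f = {drop (f \<sigma>) \<sigma> | \<sigma>. \<sigma> \<in> A}"

(* deduct A B n : there is a deduction tree for <A,B> of size n
   (size = number of rule applications). |A^X| = |A| is cardinality,
   rendered as equipollence (coincides with card for finite sets). *)
inductive deduct :: "'ap trace set \<Rightarrow> 'ap trace set \<Rightarrow> nat \<Rightarrow> bool" where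
  Atomic: "models_lit A \<alpha> \<Longrightarrow> refutes_lit B \<alpha> \<Longrightarrow> deduct A B 1"
| Or: "deduct A1 B n1 \<Longrightarrow> deduct A2 B n2 \<Longrightarrow> A1 \<inter> A2 = {} \<Longrightarrow>
       deduct (A1 \<union> A2) B (n1 + n2 + 1)"
| And: "deduct A B1 n1 \<Longrightarrow> deduct A B2 n2 \<Longrightarrow> B1 \<inter> B2 = {} \<Longrightarrow>
       deduct A (B1 \<union> B2) (n1 + n2 + 1)"
| Next: "deduct (setX A) (setX B) n \<Longrightarrow> setX A \<approx> A \<Longrightarrow> deduct A B (n + 1)"
| WeakNext: "deduct (setX A) (setX B) n \<Longrightarrow> setX B \<approx> B \<Longrightarrow> deduct A B (n + 1)"
| Future: "future_point A f \<Longrightarrow> deduct (setF A f) (setG B) n \<Longrightarrow> deduct A B (n + 1)"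
| Globally: "future_point B f \<Longrightarrow> deduct (setG A) (setF B f) n \<Longrightarrow> deduct A B (n + 1)"

end

theory Submission
  imports Defs
begin

lemma finite_setX: "finite A \<Longrightarrow> finite (setX A)"
proof -
  assume "finite A"
  have "setX A = (drop 1) ` {x\<in>A. length x \<ge> 2}" unfolding setX_def by auto
  thus ?thesis using \<open>finite A\<close> by simp
qed

lemma finite_setF: "finite A \<Longrightarrow> finite (setF A f)"
proof -
  assume "finite A"
  have "setF A f = (\<lambda>x. drop (f x) x) ` A" unfolding setF_def by auto
  thus ?thesis using \<open>finite A\<close> by simp
qed

lemma finite_setG: "finite A \<Longrightarrow> finite (setG A)"
proof -
  assume "finite A"
  have "setG A \<subseteq> (\<lambda>(x,j). drop j x) ` (A \<times> {..Max (length ` A)})"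
  proof
    fix y assume "y \<in> setG A"
    then obtain x j where "y = drop j x" "x \<in> A" "j < length x" unfolding setG_def by auto
    moreover have "length x \<le> Max (length ` A)" using \<open>finite A\<close> \<open>x \<in> A\<close> by simp
    ultimately show "y \<in> (\<lambda>(x,j). drop j x) ` (A \<times> {..Max (length ` A)})" by force
  qed
  thus ?thesis using \<open>finite A\<close> by (meson finite_SigmaI finite_atMost finite_imageI finite_subset)
qed

lemma setX_len: assumes "finite A" "setX A \<approx> A" "a \<in> A" shows "length a \<ge> 2"
proof (rule ccontr)
  assume "\<not> length a \<ge> 2"
  let ?S = "{x\<in>A. length x \<ge> 2}"
  have e: "setX A = (drop 1) ` ?S" unfolding setX_def by auto
  have "card (setX A) = card A" using assms(2) assms(1) finite_setX eqpoll_iff_card by blast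
  moreover have "card (setX A) \<le> card ?S" unfolding e by (intro card_image_le) (simp add: assms(1))
  moreover have "?S \<subset> A" using assms(3) \<open>\<not> length a \<ge> 2\<close> by auto
  hence "card ?S < card A" using assms(1) psubset_card_mono by blast
  ultimately show False by simp
qed

lemma disj: "deduct A B n \<Longrightarrow> finite A \<Longrightarrow> finite B \<Longrightarrow> A \<inter> B = {}"
proof (induction rule: deduct.induct)
  case (Atomic A \<alpha> B)
  then show ?case unfolding models_lit_def refutes_lit_def by auto
next
  case (Or A1 B n1 A2 n2)
  then show ?case by auto
next
  case (And A B1 n1 B2 n2)
  then show ?case by auto
next
  case (Next A B n)
  have "setX A \<inter> setX B = {}" using Next finite_setX by blast
  show ?case
  proof (rule ccontr)
    assume "A \<inter> B \<noteq> {}"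
    then obtain x where x: "x \<in> A" "x \<in> B" by auto
    have "length x \<ge> 2" using setX_len Next x by blast
    hence "drop 1 x \<in> setX A" "drop 1 x \<in> setX B" using x unfolding setX_def by auto
    thus False using \<open>setX A \<inter> setX B = {}\<close> by auto
  qed
next
  case (WeakNext A B n)
  have "setX A \<inter> setX B = {}" using WeakNext finite_setX by blast
  show ?case
  proof (rule ccontr)
    assume "A \<inter> B \<noteq> {}"
    then obtain x where x: "x \<in> A" "x \<in> B" by auto
    have "length x \<ge> 2" using setX_len WeakNext x by blast
    hence "drop 1 x \<in> setX A" "drop 1 x \<in> setX B" using x unfolding setX_def by auto
    thus False using \<open>setX A \<inter> setX B = {}\<close> by auto
  qed
next
  case (Future A f B n)
  have d: "setF A f \<inter> setG B = {}" using Future finite_setF finite_setG by blast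
  show ?case
  proof (rule ccontr)
    assume "A \<inter> B \<noteq> {}"
    then obtain x where x: "x \<in> A" "x \<in> B" by auto
    have "f x < length x" using Future(1) x unfolding future_point_def by auto
    hence "drop (f x) x \<in> setF A f" "drop (f x) x \<in> setG B" using x unfolding setF_def setG_def by auto
    thus False using d by auto
  qed
next
  case (Globally B f A n)
  have d: "setG A \<inter> setF B f = {}" using Globally finite_setF finite_setG by blast
  show ?case
  proof (rule ccontr)
    assume "A \<inter> B \<noteq> {}"
    then obtain x where x: "x \<in> A" "x \<in> B" by auto
    have "f x < length x" using Globally(1) x unfolding future_point_def by auto
    hence "drop (f x) x \<in> setF B f" "drop (f x) x \<in> setG A" using x unfolding setF_def setG_def by auto
    thus False using d by auto
  qed
qed


lemma main: "deduct A B n \<Longrightarrow> finite A \<Longrightarrow> finite B \<Longrightarrow> \<sigma> \<noteq> [] \<Longrightarrow>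
   replicate i u @ \<sigma> \<in> A \<Longrightarrow> replicate j u @ \<sigma> \<in> B \<Longrightarrow> n \<ge> min i j + 1"
proof (induction arbitrary: i j rule: deduct.induct)
  case (Atomic A \<alpha> B)
  then show ?case unfolding models_lit_def refutes_lit_def
    by (cases i; cases j; fastforce)
next
  case (Or A1 B n1 A2 n2)
  then show ?case by fastforce
next
  case (And A B1 n1 B2 n2)
  then show ?case by fastforce
next
  case (Next A B n)
  show ?case
  proof (cases "i = 0 \<or> j = 0")
    case True then show ?thesis by auto
  next
    case False
    then obtain i' j' where ij: "i = Suc i'" "j = Suc j'" by (cases i; cases j; auto)
    have "replicate i' u @ \<sigma> \<in> setX A" using Next.prems(4) Next.prems(3) unfolding setX_def ij
      by (auto simp: Suc_le_eq intro!: exI[of _ "u # replicate i' u @ \<sigma>"])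
    moreover have "replicate j' u @ \<sigma> \<in> setX B" using Next.prems(5) Next.prems(3) unfolding setX_def ij
      by (auto simp: Suc_le_eq intro!: exI[of _ "u # replicate j' u @ \<sigma>"])
    ultimately have "n \<ge> min i' j' + 1" using Next finite_setX by blast
    thus ?thesis using ij by auto
  qed
next
  case (WeakNext A B n)
  show ?case
  proof (cases "i = 0 \<or> j = 0")
    case True then show ?thesis by auto
  next
    case False
    then obtain i' j' where ij: "i = Suc i'" "j = Suc j'" by (cases i; cases j; auto)
    have "replicate i' u @ \<sigma> \<in> setX A" using WeakNext.prems(4) WeakNext.prems(3) unfolding setX_def ij
      by (auto simp: Suc_le_eq intro!: exI[of _ "u # replicate i' u @ \<sigma>"])
    moreover have "replicate j' u @ \<sigma> \<in> setX B" using WeakNext.prems(5) WeakNext.prems(3) unfolding setX_def ij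
      by (auto simp: Suc_le_eq intro!: exI[of _ "u # replicate j' u @ \<sigma>"])
    ultimately have "n \<ge> min i' j' + 1" using WeakNext finite_setX by blast
    thus ?thesis using ij by auto
  qed
next
  case (Future A f B n)
  let ?a = "replicate i u @ \<sigma>" and ?b = "replicate j u @ \<sigma>"
  define k where "k = f ?a"
  have fin: "finite (setF A f)" "finite (setG B)" using Future finite_setF finite_setG by auto
  have d: "setF A f \<inter> setG B = {}" using disj Future fin by blast
  have ka: "drop k ?a \<in> setF A f" using Future.prems(4) unfolding setF_def k_def by blast
  have kl: "k < length ?a" using Future(1) Future.prems(4) unfolding future_point_def k_def by auto
  show ?case
  proof (cases "k < i \<and> i - k > j")
    case True
    have "drop k ?a = replicate (i - k) u @ \<sigma>" using True by simp
    moreover have "?b \<in> setG B" using Future.prems(5) Future.prems(3) unfolding setG_def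
      by (auto intro!: exI[of _ "?b"] exI[of _ 0])
    ultimately have "n \<ge> min (i - k) j + 1" using Future.IH fin Future.prems(3) ka by metis
    thus ?thesis using True by auto
  next
    case False
    then obtain m where m: "drop k ?a = drop m ?b" "m < length ?b"
    proof (cases "k < i")
      case True
      hence "drop k ?a = drop (j - (i - k)) ?b" using False by simp
      moreover have "j - (i - k) < length ?b" using Future.prems(3) by (cases \<sigma>) auto
      ultimately show ?thesis using that by blast
    next
      case c: False
      hence "drop k ?a = drop (k - i + j) ?b" by simp
      moreover have "k - i + j < length ?b" using kl c by simp
      ultimately show ?thesis using that by blast
    qed
    hence "drop k ?a \<in> setG B" using Future.prems(5) unfolding setG_def by blast
    thus ?thesis using d ka by auto
  qed
next
  case (Globally B f A n)
  let ?a = "replicate i u @ \<sigma>" and ?b = "replicate j u @ \<sigma>"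
  define k where "k = f ?b"
  have fin: "finite (setF B f)" "finite (setG A)" using Globally finite_setF finite_setG by auto
  have d: "setG A \<inter> setF B f = {}" using disj Globally fin by blast
  have ka: "drop k ?b \<in> setF B f" using Globally.prems(5) unfolding setF_def k_def by blast
  have kl: "k < length ?b" using Globally(1) Globally.prems(5) unfolding future_point_def k_def by auto
  show ?case
  proof (cases "k < j \<and> j - k > i")
    case True
    have "drop k ?b = replicate (j - k) u @ \<sigma>" using True by simp
    moreover have "?a \<in> setG A" using Globally.prems(4) Globally.prems(3) unfolding setG_def
      by (auto intro!: exI[of _ "?a"] exI[of _ 0])
    ultimately have "n \<ge> min i (j - k) + 1" using Globally.IH fin Globally.prems(3) ka by metis
    thus ?thesis using True by auto
  next
    case False
    then obtain m where m: "drop k ?b = drop m ?a" "m < length ?a"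
    proof (cases "k < j")
      case True
      hence "drop k ?b = drop (i - (j - k)) ?a" using False by simp
      moreover have "i - (j - k) < length ?a" using Globally.prems(3) by (cases \<sigma>) auto
      ultimately show ?thesis using that by blast
    next
      case c: False
      hence "drop k ?b = drop (k - j + i) ?a" by simp
      moreover have "k - j + i < length ?a" using kl c by simp
      ultimately show ?thesis using that by blast
    qed
    hence "drop k ?b \<in> setG A" using Globally.prems(4) unfolding setG_def by blast
    thus ?thesis using d ka by auto
  qed
qed

theorem lemma11:
  fixes u :: "'ap::finite set" and \<sigma> :: "'ap set list" and i j n :: nat
  assumes "\<sigma> \<noteq> []"
    and "u \<noteq> hd \<sigma>"
    and "deduct {replicate i u @ \<sigma>} {replicate j u @ \<sigma>} n"
  shows "n \<ge> min i j + 1"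
  by (rule main[OF assms(3)]) (use assms(1) in auto)

end
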